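(* Let $N$ be even, $J_1,J_2>0$, and let $\mathcal H_N$ be the plaquette orbital Hamiltonian on the torus $\mathbb T_N$ (see context). (i) If $J_1=J_2>0$, then every ground state of $\mathcal H_N$ can be obtained from a constant configuration $\mathbf S_{\boldsymbol r}\equiv \boldsymbol e$, for some unit vector $\boldsymbol e\in\mathbb R^2$, by successive applications of a subset of the maps $(\boldsymbol\varphi_{\boldsymbol r})$. (ii) If $J_1>J_2>0$, then every ground state arises from the constant configuration $\mathbf S_{\boldsymbol r}\equiv\boldsymbol e_1$ by successive applications of a subset of the maps $(\boldsymbol\varphi_{\boldsymbol r})$; if $J_2>J_1>0$, every ground state arises in this way from $\mathbf S_{\boldsymbol r}\equiv \boldsymbol e_2$.
   Context: Let $N$ be an even positive integer and $\mathbb T_N=(\mathbb Z/N\mathbb Z)^2$ the $N\times N$ torus, with unit vectors $\boldsymbol e_1=(1,0)$, $\boldsymbol e_2=(0,1)$. Nearest-neighbour edges are of two types: the horizontal edge $\langle \boldsymbol r,\boldsymbol r+\boldsymbol e_1\rangle$ is an $x$-edge if $r_1$ is even and a $z$-edge if $r_1$ is odd; the vertical edge $\langle\boldsymbol r,\boldsymbol r+\boldsymbol e_2\rangle$ is an $x$-edge if $r_2$ is even and a $z$-edge if $r_2$ is odd. (So each plaquette whose lower-left corner has both coordinates even consists of four $x$-edges, and each plaquette whose lower-left corner has both coordinates odd consists of four $z$-edges.) A configuration is $\mathbf S=(\mathbf S_{\boldsymbol r})_{\boldsymbol r\in\mathbb T_N}$ with each $\mathbf S_{\boldsymbol r}=(S^x_{\boldsymbol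 r},S^z_{\boldsymbol r})$ a unit vector in $\mathbb R^2$. The Hamiltonian is $\mathcal H_N(\mathbf S)=-J_1\sum_{\langle \boldsymbol r,\boldsymbol r'\rangle\ x\text{-edge}}S^x_{\boldsymbol r}S^x_{\boldsymbol r'}-J_2\sum_{\langle \boldsymbol r,\boldsymbol r'\rangle\ z\text{-edge}}S^z_{\boldsymbol r}S^z_{\boldsymbol r'}$. A ground state is a configuration minimizing $\mathcal H_N$. For $\boldsymbol r$ with both coordinates even, $\boldsymbol\varphi_{\boldsymbol r}$ maps $\mathbf S$ to the configuration obtained by replacing $S^x_{\boldsymbol r'}$ by $-S^x_{\boldsymbol r'}$ at the four sites $\boldsymbol r'\in\{\boldsymbol r,\boldsymbol r+\boldsymbol e_1,\boldsymbol r+\boldsymbol e_2,\boldsymbol r+\boldsymbol e_1+\boldsymbol e_2\}$ (all other components unchanged); for $\boldsymbol r$ with both coordinates odd, $\boldsymbol\varphi_{\boldsymbol r}$ does the same with the $z$-components instead of the $x$-components. *)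

theory Defs
  imports Complex_Main
begin

text \<open>Sites of the torus T_N are pairs (a,b) with a,b < N; coordinates are taken mod N.
A spin is a pair (S^x, S^z) of reals. Configurations are functions on sites; only
their values on the torus matter.\<close>

definition torus :: "nat \<Rightarrow> (nat \<times> nat) set" where
  "torus N = {0..<N} \<times> {0..<N}"

definition shift1 :: "nat \<Rightarrow> nat \<times> nat \<Rightarrow> nat \<times> nat" where
  "shift1 N r = ((fst r + 1) mod N, snd r)"

definition shift2 :: "nat \<Rightarrow> nat \<times> nat \<Rightarrow> nat \<times> nat" where
  "shift2 N r = (fst r, (snd r + 1) mod N)"

definition is_config :: "nat \<Rightarrow> (nat \<times> nat \<Rightarrow> real \<times> real) \<Rightarrow> bool" where
  "is_config N S \<longleftrightarrow> (\<forall>r\<in>torus N. (fst (S r))\<^sup>2 + (snd (S r))\<^sup>2 = 1)"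

text \<open>Horizontal edge <r, r+e1> is an x-edge iff r_1 even, a z-edge iff r_1 odd;
vertical edge <r, r+e2> is an x-edge iff r_2 even, a z-edge iff r_2 odd.\<close>

definition hamiltonian :: "nat \<Rightarrow> real \<Rightarrow> real \<Rightarrow> (nat \<times> nat \<Rightarrow> real \<times> real) \<Rightarrow> real" where
  "hamiltonian N J1 J2 S =
     - J1 * (\<Sum>r\<in>torus N.
          (if even (fst r) then fst (S r) * fst (S (shift1 N r)) else 0)
        + (if even (snd r) then fst (S r) * fst (S (shift2 N r)) else 0))
     - J2 * (\<Sum>r\<in>torus N.
          (if odd (fst r) then snd (S r) * snd (S (shift1 N r)) else 0)
        + (if odd (snd r) then snd (S r) * snd (S (shift2 N r)) else 0))"

definition ground_state :: "nat \<Rightarrow> real \<Rightarrow> real \<Rightarrow> (nat \<times> nat \<Rightarrow> real \<times> real) \<Rightarrow> bool" where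
  "ground_state N J1 J2 S \<longleftrightarrow> is_config N S \<and>
     (\<forall>T. is_config N T \<longrightarrow> hamiltonian N J1 J2 S \<le> hamiltonian N J1 J2 T)"

definition plaq_corner :: "nat \<Rightarrow> nat \<times> nat \<Rightarrow> bool" where
  "plaq_corner N r \<longleftrightarrow> r \<in> torus N \<and>
     ((even (fst r) \<and> even (snd r)) \<or> (odd (fst r) \<and> odd (snd r)))"

definition plaquette :: "nat \<Rightarrow> nat \<times> nat \<Rightarrow> (nat \<times> nat) set" where
  "plaquette N r = {r, shift1 N r, shift2 N r, shift2 N (shift1 N r)}"

definition phi :: "nat \<Rightarrow> nat \<times> nat \<Rightarrow> (nat \<times> nat \<Rightarrow> real \<times> real) \<Rightarrow> (nat \<times> nat \<Rightarrow> real \<times> real)" where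
  "phi N r S = (\<lambda>s. if s \<in> plaquette N r then
       (if even (fst r) then (- fst (S s), snd (S s)) else (fst (S s), - snd (S s)))
     else S s)"

definition obtainable_from :: "nat \<Rightarrow> real \<times> real \<Rightarrow> (nat \<times> nat \<Rightarrow> real \<times> real) \<Rightarrow> bool" where
  "obtainable_from N e S \<longleftrightarrow>
     (\<exists>rs. distinct rs \<and> (\<forall>r\<in>set rs. plaq_corner N r) \<and>
        (\<forall>s\<in>torus N. fold (phi N) rs (\<lambda>_. e) s = S s))"

end

theory Submission
  imports Defs
begin

lemma mod_succ: "(a::nat) < N \<Longrightarrow> Suc a mod N = (if Suc a = N then 0 else Suc a)"
  by auto

lemma shift1_torus: "N > 0 \<Longrightarrow> r \<in> torus N \<Longrightarrow> shift1 N r \<in> torus N"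
  by (auto simp: torus_def shift1_def)

lemma shift2_torus: "N > 0 \<Longrightarrow> r \<in> torus N \<Longrightarrow> shift2 N r \<in> torus N"
  by (auto simp: torus_def shift2_def)

lemma inj_succ: "(a::nat) < N \<Longrightarrow> b < N \<Longrightarrow> Suc a mod N = Suc b mod N \<Longrightarrow> a = b"
  by (simp add: mod_succ split: if_splits)

lemma shift1_bij: "N > 0 \<Longrightarrow> bij_betw (shift1 N) (torus N) (torus N)"
proof -
  assume N: "N > 0"
  have fin: "finite (torus N)" by (simp add: torus_def)
  have sub: "shift1 N ` torus N \<subseteq> torus N" using shift1_torus[OF N] by auto
  have inj: "inj_on (shift1 N) (torus N)"
    by (auto simp: inj_on_def torus_def shift1_def dest: inj_succ)
  show ?thesis using endo_inj_surj[OF fin sub inj] inj by (simp add: bij_betw_def)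
qed

lemma shift2_bij: "N > 0 \<Longrightarrow> bij_betw (shift2 N) (torus N) (torus N)"
proof -
  assume N: "N > 0"
  have fin: "finite (torus N)" by (simp add: torus_def)
  have sub: "shift2 N ` torus N \<subseteq> torus N" using shift2_torus[OF N] by auto
  have inj: "inj_on (shift2 N) (torus N)"
    by (auto simp: inj_on_def torus_def shift2_def dest: inj_succ)
  show ?thesis using endo_inj_surj[OF fin sub inj] inj by (simp add: bij_betw_def)
qed

lemma par_succ: "even N \<Longrightarrow> (a::nat) < N \<Longrightarrow> even (Suc a mod N) \<longleftrightarrow> odd a"
  by (auto simp: mod_succ)

lemma edge_sum:
  fixes f :: "'a \<Rightarrow> real"
  assumes fin: "finite A" and bij: "bij_betw \<sigma> A A" and alt: "\<forall>r\<in>A. Q (\<sigma> r) \<longleftrightarrow> \<not> Q r"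
  shows "(\<Sum>r\<in>A. if Q r then f r * f (\<sigma> r) else 0)
     = (\<Sum>r\<in>A. (f r)\<^sup>2)/2 - (\<Sum>r\<in>A. if Q r then (f r - f (\<sigma> r))\<^sup>2 else 0)/2"
proof -
  define h where "h r = (if \<not> Q r then (f r)\<^sup>2 else 0)" for r
  have re: "(\<Sum>r\<in>A. h (\<sigma> r)) = (\<Sum>r\<in>A. h r)"
    using sum.reindex_bij_betw[OF bij, of h] by simp
  have re2: "(\<Sum>r\<in>A. h (\<sigma> r)) = (\<Sum>r\<in>A. if Q r then (f (\<sigma> r))\<^sup>2 else 0)"
    by (rule sum.cong) (auto simp: h_def alt)
  have split: "(\<Sum>r\<in>A. (f r)\<^sup>2) = (\<Sum>r\<in>A. if Q r then (f r)\<^sup>2 else 0) + (\<Sum>r\<in>A. h r)"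
    unfolding h_def sum.distrib[symmetric] by (rule sum.cong) auto
  have "(\<Sum>r\<in>A. if Q r then f r * f (\<sigma> r) else 0)
     = (\<Sum>r\<in>A. (if Q r then (f r)\<^sup>2 else 0)/2 + (if Q r then (f (\<sigma> r))\<^sup>2 else 0)/2
           - (if Q r then (f r - f (\<sigma> r))\<^sup>2 else 0)/2)"
    by (rule sum.cong) (auto simp: power2_eq_square field_simps)
  also have "\<dots> = (\<Sum>r\<in>A. if Q r then (f r)\<^sup>2 else 0)/2 + (\<Sum>r\<in>A. if Q r then (f (\<sigma> r))\<^sup>2 else 0)/2
           - (\<Sum>r\<in>A. if Q r then (f r - f (\<sigma> r))\<^sup>2 else 0)/2"
    by (simp add: sum.distrib sum_subtractf sum_divide_distrib)
  finally show ?thesis using re re2 split by simp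
qed

definition DX :: "nat \<Rightarrow> (nat \<times> nat \<Rightarrow> real \<times> real) \<Rightarrow> real" where
  "DX N S = (\<Sum>r\<in>torus N. (if even (fst r) then (fst (S r) - fst (S (shift1 N r)))\<^sup>2 else 0)
      + (if even (snd r) then (fst (S r) - fst (S (shift2 N r)))\<^sup>2 else 0))"

definition DZ :: "nat \<Rightarrow> (nat \<times> nat \<Rightarrow> real \<times> real) \<Rightarrow> real" where
  "DZ N S = (\<Sum>r\<in>torus N. (if odd (fst r) then (snd (S r) - snd (S (shift1 N r)))\<^sup>2 else 0)
      + (if odd (snd r) then (snd (S r) - snd (S (shift2 N r)))\<^sup>2 else 0))"

lemma ham_decomp:
  assumes "even N" "N > 0"
  shows "hamiltonian N J1 J2 S = - J1 * ((\<Sum>r\<in>torus N. (fst (S r))\<^sup>2) - DX N S / 2)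
                                 - J2 * ((\<Sum>r\<in>torus N. (snd (S r))\<^sup>2) - DZ N S / 2)"
proof -
  have fin: "finite (torus N)" by (simp add: torus_def)
  have a1: "\<forall>r\<in>torus N. even (fst (shift1 N r)) \<longleftrightarrow> \<not> even (fst r)"
    using assms by (auto simp: torus_def shift1_def par_succ)
  have a2: "\<forall>r\<in>torus N. even (snd (shift2 N r)) \<longleftrightarrow> \<not> even (snd r)"
    using assms by (auto simp: torus_def shift2_def par_succ)
  have a3: "\<forall>r\<in>torus N. odd (fst (shift1 N r)) \<longleftrightarrow> \<not> odd (fst r)"
    using a1 by auto
  have a4: "\<forall>r\<in>torus N. odd (snd (shift2 N r)) \<longleftrightarrow> \<not> odd (snd r)"
    using a2 by auto
  note e1 = edge_sum[OF fin shift1_bij[OF assms(2)] a1, of "\<lambda>r. fst (S r)"]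
  note e2 = edge_sum[OF fin shift2_bij[OF assms(2)] a2, of "\<lambda>r. fst (S r)"]
  note e3 = edge_sum[OF fin shift1_bij[OF assms(2)] a3, of "\<lambda>r. snd (S r)"]
  note e4 = edge_sum[OF fin shift2_bij[OF assms(2)] a4, of "\<lambda>r. snd (S r)"]
  show ?thesis
    unfolding hamiltonian_def DX_def DZ_def sum.distrib e1 e2 e3 e4 by (simp add: field_simps)
qed

lemma card_torus: "card (torus N) = N * N"
  by (simp add: torus_def card_cartesian_product)

lemma DX_nonneg: "DX N S \<ge> 0" unfolding DX_def by (rule sum_nonneg) auto
lemma DZ_nonneg: "DZ N S \<ge> 0" unfolding DZ_def by (rule sum_nonneg) auto

definition flat :: "nat \<Rightarrow> (nat \<times> nat \<Rightarrow> real \<times> real) \<Rightarrow> bool" where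
  "flat N S \<longleftrightarrow> (\<forall>r\<in>torus N. (even (fst r) \<longrightarrow> fst (S r) = fst (S (shift1 N r)))
     \<and> (even (snd r) \<longrightarrow> fst (S r) = fst (S (shift2 N r)))
     \<and> (odd (fst r) \<longrightarrow> snd (S r) = snd (S (shift1 N r)))
     \<and> (odd (snd r) \<longrightarrow> snd (S r) = snd (S (shift2 N r))))"

lemma DX_DZ_zero: "DX N S = 0 \<Longrightarrow> DZ N S = 0 \<Longrightarrow> flat N S"
proof -
  assume x: "DX N S = 0" and z: "DZ N S = 0"
  have fin: "finite (torus N)" by (simp add: torus_def)
  from x have hx: "\<forall>r\<in>torus N. (if even (fst r) then (fst (S r) - fst (S (shift1 N r)))\<^sup>2 else 0)
      + (if even (snd r) then (fst (S r) - fst (S (shift2 N r)))\<^sup>2 else 0) = 0"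
    unfolding DX_def by (subst (asm) sum_nonneg_eq_0_iff[OF fin]) auto
  from z have hz: "\<forall>r\<in>torus N. (if odd (fst r) then (snd (S r) - snd (S (shift1 N r)))\<^sup>2 else 0)
      + (if odd (snd r) then (snd (S r) - snd (S (shift2 N r)))\<^sup>2 else 0) = 0"
    unfolding DZ_def by (subst (asm) sum_nonneg_eq_0_iff[OF fin]) auto
  show ?thesis unfolding flat_def
  proof
    fix r assume r: "r \<in> torus N"
    have A: "(if even (fst r) then (fst (S r) - fst (S (shift1 N r)))\<^sup>2 else 0) = 0 \<and>
             (if even (snd r) then (fst (S r) - fst (S (shift2 N r)))\<^sup>2 else 0) = 0"
      using hx[rule_format, OF r] by (smt (verit) zero_le_power2)
    have B: "(if odd (fst r) then (snd (S r) - snd (S (shift1 N r)))\<^sup>2 else 0) = 0 \<and>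
             (if odd (snd r) then (snd (S r) - snd (S (shift2 N r)))\<^sup>2 else 0) = 0"
      using hz[rule_format, OF r] by (smt (verit) zero_le_power2)
    show "(even (fst r) \<longrightarrow> fst (S r) = fst (S (shift1 N r)))
     \<and> (even (snd r) \<longrightarrow> fst (S r) = fst (S (shift2 N r)))
     \<and> (odd (fst r) \<longrightarrow> snd (S r) = snd (S (shift1 N r)))
     \<and> (odd (snd r) \<longrightarrow> snd (S r) = snd (S (shift2 N r)))"
      using A B by (auto split: if_splits)
  qed
qed


lemma shift1_pair: "i < N \<Longrightarrow> Suc i < N \<Longrightarrow> shift1 N (i, j) = (Suc i, j)"
  by (simp add: shift1_def)
lemma shift2_pair: "j < N \<Longrightarrow> Suc j < N \<Longrightarrow> shift2 N (i, j) = (i, Suc j)"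
  by (simp add: shift2_def)

lemma const_torus:
  assumes N: "N > 0"
    and h1: "\<forall>r\<in>torus N. g (shift1 N r) = g r"
    and h2: "\<forall>r\<in>torus N. g (shift2 N r) = g r"
    and r: "r \<in> torus N"
  shows "g r = g (0, 0)"
proof -
  have col: "\<forall>j. j < N \<longrightarrow> g (0, j) = g (0, 0)"
  proof
    fix j show "j < N \<longrightarrow> g (0, j) = g (0, 0)"
    proof (induction j)
      case 0 show ?case by simp
    next
      case (Suc j)
      show ?case
      proof
        assume "Suc j < N"
        hence "(0, j) \<in> torus N" using N by (simp add: torus_def)
        hence "g (shift2 N (0, j)) = g (0, j)" using h2 by auto
        moreover have "shift2 N (0, j) = (0, Suc j)" using \<open>Suc j < N\<close> by (simp add: shift2_def)
        moreover have "g (0, j) = g (0, 0)" using Suc.IH \<open>Suc j < N\<close> by simp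
        ultimately show "g (0, Suc j) = g (0, 0)" by simp
      qed
    qed
  qed
  have all: "\<forall>i. i < N \<longrightarrow> (\<forall>j<N. g (i, j) = g (0, 0))"
  proof
    fix i show "i < N \<longrightarrow> (\<forall>j<N. g (i, j) = g (0, 0))"
    proof (induction i)
      case 0 show ?case using col by blast
    next
      case (Suc i)
      show ?case
      proof (intro impI allI)
        fix j assume "Suc i < N" "j < N"
        hence "(i, j) \<in> torus N" by (simp add: torus_def)
        hence "g (shift1 N (i, j)) = g (i, j)" using h1 by auto
        moreover have "shift1 N (i, j) = (Suc i, j)" using \<open>Suc i < N\<close> by (simp add: shift1_def)
        moreover have "g (i, j) = g (0, 0)" using Suc.IH \<open>Suc i < N\<close> \<open>j < N\<close> by auto
        ultimately show "g (Suc i, j) = g (0, 0)" by simp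
      qed
    qed
  qed
  obtain i j where "r = (i, j)" "i < N" "j < N" using r by (auto simp: torus_def)
  thus ?thesis using all by blast
qed

lemma sq_const:
  assumes N: "N > 0" and c: "is_config N S" and f: "flat N S" and r: "r \<in> torus N"
  shows "(fst (S r))\<^sup>2 = (fst (S (0,0)))\<^sup>2 \<and> (snd (S r))\<^sup>2 = (snd (S (0,0)))\<^sup>2"
proof -
  have u: "\<And>r. r \<in> torus N \<Longrightarrow> (fst (S r))\<^sup>2 + (snd (S r))\<^sup>2 = 1" using c by (simp add: is_config_def)
  have h1: "\<forall>r\<in>torus N. (fst (S (shift1 N r)))\<^sup>2 = (fst (S r))\<^sup>2 \<and> (snd (S (shift1 N r)))\<^sup>2 = (snd (S r))\<^sup>2"
  proof
    fix r assume r: "r \<in> torus N"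
    have "shift1 N r \<in> torus N" using shift1_torus[OF N r] .
    with u[OF r] u[of "shift1 N r"] f r show "(fst (S (shift1 N r)))\<^sup>2 = (fst (S r))\<^sup>2 \<and> (snd (S (shift1 N r)))\<^sup>2 = (snd (S r))\<^sup>2"
      unfolding flat_def by (cases "even (fst r)") auto
  qed
  have h2: "\<forall>r\<in>torus N. (fst (S (shift2 N r)))\<^sup>2 = (fst (S r))\<^sup>2 \<and> (snd (S (shift2 N r)))\<^sup>2 = (snd (S r))\<^sup>2"
  proof
    fix r assume r: "r \<in> torus N"
    have "shift2 N r \<in> torus N" using shift2_torus[OF N r] .
    with u[OF r] u[of "shift2 N r"] f r show "(fst (S (shift2 N r)))\<^sup>2 = (fst (S r))\<^sup>2 \<and> (snd (S (shift2 N r)))\<^sup>2 = (snd (S r))\<^sup>2"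
      unfolding flat_def by (cases "even (snd r)") auto
  qed
  show ?thesis
    using const_torus[OF N _ _ r, of "\<lambda>r. (fst (S r))\<^sup>2"] const_torus[OF N _ _ r, of "\<lambda>r. (snd (S r))\<^sup>2"] h1 h2
    by auto
qed

lemma plaq_mem: "s \<in> plaquette N r \<longleftrightarrow> (fst s = fst r \<or> fst s = Suc (fst r) mod N) \<and> (snd s = snd r \<or> snd s = Suc (snd r) mod N)"
  by (cases s; cases r) (auto simp: plaquette_def shift1_def shift2_def)

lemma flat_plaq_x:
  assumes f: "flat N S" and N: "N > 0" and r: "r \<in> torus N" "even (fst r)" "even (snd r)"
    and s: "s \<in> plaquette N r"
  shows "fst (S s) = fst (S r)"
proof -
  have a: "fst (S (shift1 N r)) = fst (S r)" "fst (S (shift2 N r)) = fst (S r)"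
    using f r unfolding flat_def by auto
  have t: "shift1 N r \<in> torus N" using shift1_torus[OF N r(1)] .
  have "snd (shift1 N r) = snd r" by (simp add: shift1_def)
  hence "fst (S (shift2 N (shift1 N r))) = fst (S (shift1 N r))"
    using f t r unfolding flat_def by auto
  thus ?thesis using s a unfolding plaquette_def by auto
qed

lemma flat_plaq_z:
  assumes f: "flat N S" and N: "N > 0" and r: "r \<in> torus N" "odd (fst r)" "odd (snd r)"
    and s: "s \<in> plaquette N r"
  shows "snd (S s) = snd (S r)"
proof -
  have a: "snd (S (shift1 N r)) = snd (S r)" "snd (S (shift2 N r)) = snd (S r)"
    using f r unfolding flat_def by auto
  have t: "shift1 N r \<in> torus N" using shift1_torus[OF N r(1)] .
  have "snd (shift1 N r) = snd r" by (simp add: shift1_def)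
  hence "snd (S (shift2 N (shift1 N r))) = snd (S (shift1 N r))"
    using f t r unfolding flat_def by auto
  thus ?thesis using s a unfolding plaquette_def by auto
qed

definition ox :: "nat \<Rightarrow> nat" where "ox k = 2 * (k div 2)"
definition oz :: "nat \<Rightarrow> nat \<Rightarrow> nat" where "oz N k = (if odd k then k else if k = 0 then N - 1 else k - 1)"

lemma ox_ok: "even N \<Longrightarrow> k < N \<Longrightarrow> ox k < N \<and> even (ox k) \<and> (k = ox k \<or> k = Suc (ox k) mod N)"
  unfolding ox_def by (cases "even k") (auto simp: mod_succ elim!: evenE oddE)

lemma ox_uniq: "even N \<Longrightarrow> a < N \<Longrightarrow> even a \<Longrightarrow> (k = a \<or> k = Suc a mod N) \<Longrightarrow> a = ox k"
  unfolding ox_def by (auto simp: mod_succ elim!: evenE)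

lemma oz_ok: "even N \<Longrightarrow> N > 0 \<Longrightarrow> k < N \<Longrightarrow> oz N k < N \<and> odd (oz N k) \<and> (k = oz N k \<or> k = Suc (oz N k) mod N)"
  unfolding oz_def by (auto simp: mod_succ)

lemma oz_uniq: "even N \<Longrightarrow> a < N \<Longrightarrow> odd a \<Longrightarrow> (k = a \<or> k = Suc a mod N) \<Longrightarrow> a = oz N k"
  unfolding oz_def by (auto simp: mod_succ split: if_splits)

lemma fold_phi:
  "fold (phi N) rs S s = (fst (S s) * (-1) ^ length (filter (\<lambda>r. even (fst r) \<and> s \<in> plaquette N r) rs),
                          snd (S s) * (-1) ^ length (filter (\<lambda>r. odd (fst r) \<and> s \<in> plaquette N r) rs))"
proof (induction rs arbitrary: S)
  case Nil show ?case by simp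
next
  case (Cons r rs)
  have "fold (phi N) (r # rs) S s = fold (phi N) rs (phi N r S) s" by simp
  also have "\<dots> = (fst (phi N r S s) * (-1) ^ length (filter (\<lambda>r. even (fst r) \<and> s \<in> plaquette N r) rs),
                          snd (phi N r S s) * (-1) ^ length (filter (\<lambda>r. odd (fst r) \<and> s \<in> plaquette N r) rs))"
    by (rule Cons.IH)
  also have "\<dots> = (fst (S s) * (-1) ^ length (filter (\<lambda>r. even (fst r) \<and> s \<in> plaquette N r) (r # rs)),
                          snd (S s) * (-1) ^ length (filter (\<lambda>r. odd (fst r) \<and> s \<in> plaquette N r) (r # rs)))"
    by (auto simp: phi_def)
  finally show ?case .
qed


lemma abs_eq_sq: "(x::real)\<^sup>2 = y\<^sup>2 \<Longrightarrow> \<bar>x\<bar> = \<bar>y\<bar>"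
  by (metis real_sqrt_abs)

lemma len_filter_card: "distinct rs \<Longrightarrow> length (filter P rs) = card {r\<in>set rs. P r}"
  using distinct_card[OF distinct_filter[of rs P]] by (simp add: set_filter)

lemma flat_obtainable:
  assumes E: "even N" and N: "N > 0" and c: "is_config N S" and f: "flat N S"
  shows "obtainable_from N (\<bar>fst (S (0,0))\<bar>, \<bar>snd (S (0,0))\<bar>) S"
proof -
  define C where "C = {r \<in> torus N. plaq_corner N r \<and> (if even (fst r) then fst (S r) < 0 else snd (S r) < 0)}"
  have finC: "finite C" by (rule finite_subset[of _ "torus N"]) (auto simp: C_def torus_def)
  obtain rs where rs: "set rs = C" "distinct rs" using finite_distinct_list[OF finC] by blast
  have Kx: "{r\<in>C. even (fst r) \<and> s \<in> plaquette N r} = (if fst (S s) < 0 then {(ox (fst s), ox (snd s))} else {})"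
    if s: "s \<in> torus N" for s
  proof -
    obtain s1 s2 where s12: "s = (s1, s2)" "s1 < N" "s2 < N" using s by (auto simp: torus_def)
    have sub: "r = (ox s1, ox s2) \<and> fst (S s) < 0" if r: "r \<in> C" "even (fst r)" "s \<in> plaquette N r" for r
    proof -
      have rt: "r \<in> torus N" and pc: "plaq_corner N r" and neg: "fst (S r) < 0" using r unfolding C_def by auto
      have ev2: "even (snd r)" using pc r(2) unfolding plaq_corner_def by auto
      have lt: "fst r < N" "snd r < N" using rt by (auto simp: torus_def)
      have "fst r = ox s1" "snd r = ox s2"
        using ox_uniq[OF E lt(1) r(2), of s1] ox_uniq[OF E lt(2) ev2, of s2] r(3) s12(1)
        by (auto simp: plaq_mem)
      moreover have "fst (S s) = fst (S r)" using flat_plaq_x[OF f N rt r(2) ev2 r(3)] .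
      ultimately show ?thesis using neg by (simp add: prod_eq_iff)
    qed
    have sup: "(ox s1, ox s2) \<in> C \<and> even (fst (ox s1, ox s2)) \<and> s \<in> plaquette N (ox s1, ox s2)" if neg: "fst (S s) < 0"
    proof -
      have o1: "ox s1 < N \<and> even (ox s1) \<and> (s1 = ox s1 \<or> s1 = Suc (ox s1) mod N)" using ox_ok[OF E s12(2)] .
      have o2: "ox s2 < N \<and> even (ox s2) \<and> (s2 = ox s2 \<or> s2 = Suc (ox s2) mod N)" using ox_ok[OF E s12(3)] .
      have t: "(ox s1, ox s2) \<in> torus N" using o1 o2 by (simp add: torus_def)
      have m: "s \<in> plaquette N (ox s1, ox s2)" using o1 o2 s12(1) by (simp add: plaq_mem)
      have "fst (S s) = fst (S (ox s1, ox s2))" using flat_plaq_x[OF f N t _ _ m] o1 o2 by simp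
      thus ?thesis using t m neg o1 o2 unfolding C_def plaq_corner_def by auto
    qed
    show ?thesis
    proof (cases "fst (S s) < 0")
      case True
      have "{r\<in>C. even (fst r) \<and> s \<in> plaquette N r} = {(ox s1, ox s2)}"
      proof (rule set_eqI)
        fix r
        show "r \<in> {r\<in>C. even (fst r) \<and> s \<in> plaquette N r} \<longleftrightarrow> r \<in> {(ox s1, ox s2)}"
          using sub[of r] sup[OF True] by blast
      qed
      then show ?thesis using True s12(1) by simp
    next
      case False
      have "{r\<in>C. even (fst r) \<and> s \<in> plaquette N r} = {}" using sub False by blast
      then show ?thesis using False by simp
    qed
  qed
  have Kz: "{r\<in>C. odd (fst r) \<and> s \<in> plaquette N r} = (if snd (S s) < 0 then {(oz N (fst s), oz N (snd s))} else {})"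
    if s: "s \<in> torus N" for s
  proof -
    obtain s1 s2 where s12: "s = (s1, s2)" "s1 < N" "s2 < N" using s by (auto simp: torus_def)
    have sub: "r = (oz N s1, oz N s2) \<and> snd (S s) < 0" if r: "r \<in> C" "odd (fst r)" "s \<in> plaquette N r" for r
    proof -
      have rt: "r \<in> torus N" and pc: "plaq_corner N r" and neg: "snd (S r) < 0" using r unfolding C_def by auto
      have ev2: "odd (snd r)" using pc r(2) unfolding plaq_corner_def by auto
      have lt: "fst r < N" "snd r < N" using rt by (auto simp: torus_def)
      have "fst r = oz N s1" "snd r = oz N s2"
        using oz_uniq[OF E lt(1) r(2), of s1] oz_uniq[OF E lt(2) ev2, of s2] r(3) s12(1)
        by (auto simp: plaq_mem)
      moreover have "snd (S s) = snd (S r)" using flat_plaq_z[OF f N rt r(2) ev2 r(3)] .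
      ultimately show ?thesis using neg by (simp add: prod_eq_iff)
    qed
    have sup: "(oz N s1, oz N s2) \<in> C \<and> odd (fst (oz N s1, oz N s2)) \<and> s \<in> plaquette N (oz N s1, oz N s2)" if neg: "snd (S s) < 0"
    proof -
      have o1: "oz N s1 < N \<and> odd (oz N s1) \<and> (s1 = oz N s1 \<or> s1 = Suc (oz N s1) mod N)" using oz_ok[OF E N s12(2)] .
      have o2: "oz N s2 < N \<and> odd (oz N s2) \<and> (s2 = oz N s2 \<or> s2 = Suc (oz N s2) mod N)" using oz_ok[OF E N s12(3)] .
      have t: "(oz N s1, oz N s2) \<in> torus N" using o1 o2 by (simp add: torus_def)
      have m: "s \<in> plaquette N (oz N s1, oz N s2)" using o1 o2 s12(1) by (simp add: plaq_mem)
      have "snd (S s) = snd (S (oz N s1, oz N s2))" using flat_plaq_z[OF f N t _ _ m] o1 o2 by simp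
      thus ?thesis using t m neg o1 o2 unfolding C_def plaq_corner_def by auto
    qed
    show ?thesis
    proof (cases "snd (S s) < 0")
      case True
      have "{r\<in>C. odd (fst r) \<and> s \<in> plaquette N r} = {(oz N s1, oz N s2)}"
      proof (rule set_eqI)
        fix r
        show "r \<in> {r\<in>C. odd (fst r) \<and> s \<in> plaquette N r} \<longleftrightarrow> r \<in> {(oz N s1, oz N s2)}"
          using sub[of r] sup[OF True] by blast
      qed
      then show ?thesis using True s12(1) by simp
    next
      case False
      have "{r\<in>C. odd (fst r) \<and> s \<in> plaquette N r} = {}" using sub False by blast
      then show ?thesis using False by simp
    qed
  qed
  show ?thesis unfolding obtainable_from_def
  proof (intro exI conjI ballI)
    show "distinct rs" by (rule rs(2))
    show "plaq_corner N r" if "r \<in> set rs" for r using that rs(1) unfolding C_def by auto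
    fix s assume s: "s \<in> torus N"
    have sq: "\<bar>fst (S s)\<bar> = \<bar>fst (S (0,0))\<bar>" "\<bar>snd (S s)\<bar> = \<bar>snd (S (0,0))\<bar>"
      using abs_eq_sq[OF conjunct1[OF sq_const[OF N c f s]]] abs_eq_sq[OF conjunct2[OF sq_const[OF N c f s]]] by auto
    have lx: "length (filter (\<lambda>r. even (fst r) \<and> s \<in> plaquette N r) rs) = (if fst (S s) < 0 then 1 else 0)"
      unfolding len_filter_card[OF rs(2)] rs(1) Kx[OF s] by simp
    have lz: "length (filter (\<lambda>r. odd (fst r) \<and> s \<in> plaquette N r) rs) = (if snd (S s) < 0 then 1 else 0)"
      unfolding len_filter_card[OF rs(2)] rs(1) Kz[OF s] by simp
    show "fold (phi N) rs (\<lambda>_. (\<bar>fst (S (0,0))\<bar>, \<bar>snd (S (0,0))\<bar>)) s = S s"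
    proof (rule prod_eqI)
      show "fst (fold (phi N) rs (\<lambda>_. (\<bar>fst (S (0,0))\<bar>, \<bar>snd (S (0,0))\<bar>)) s) = fst (S s)"
        unfolding fold_phi lx sq(1)[symmetric] by (cases "fst (S s) < 0") simp_all
      show "snd (fold (phi N) rs (\<lambda>_. (\<bar>fst (S (0,0))\<bar>, \<bar>snd (S (0,0))\<bar>)) s) = snd (S s)"
        unfolding fold_phi lz sq(2)[symmetric] by (cases "snd (S s) < 0") simp_all
    qed
  qed
qed


lemma const_ham:
  assumes "even N" "N > 0"
  shows "hamiltonian N J1 J2 (\<lambda>_. (1, 0)) = - J1 * (N * N)"
    and "hamiltonian N J1 J2 (\<lambda>_. (0, 1)) = - J2 * (N * N)"
proof -
  have d: "DX N (\<lambda>_. (1::real, 0::real)) = 0" "DZ N (\<lambda>_. (1::real, 0::real)) = 0"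
          "DX N (\<lambda>_. (0::real, 1::real)) = 0" "DZ N (\<lambda>_. (0::real, 1::real)) = 0"
    unfolding DX_def DZ_def by (rule sum.neutral, auto)+
  show "hamiltonian N J1 J2 (\<lambda>_. (1, 0)) = - J1 * (N * N)"
    using ham_decomp[OF assms, of J1 J2 "\<lambda>_. (1, 0)"] d by (simp add: card_torus)
  show "hamiltonian N J1 J2 (\<lambda>_. (0, 1)) = - J2 * (N * N)"
    using ham_decomp[OF assms, of J1 J2 "\<lambda>_. (0, 1)"] d by (simp add: card_torus)
qed

lemma const_config: "is_config N (\<lambda>_. (1, 0))" "is_config N (\<lambda>_. (0, 1))"
  by (simp_all add: is_config_def)

lemma gs_flat:
  assumes E: "even N" and N: "N > 0" and J: "J1 > 0" "J2 > 0" and g: "ground_state N J1 J2 S"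
  shows "flat N S \<and> (J1 > J2 \<longrightarrow> snd (S (0,0)) = 0) \<and> (J2 > J1 \<longrightarrow> fst (S (0,0)) = 0)"
proof -
  have c: "is_config N S" using g by (simp add: ground_state_def)
  define X where "X = (\<Sum>r\<in>torus N. (fst (S r))\<^sup>2)"
  define Z where "Z = (\<Sum>r\<in>torus N. (snd (S r))\<^sup>2)"
  have fin: "finite (torus N)" by (simp add: torus_def)
  have XZ: "X + Z = N * N"
  proof -
    have "X + Z = (\<Sum>r\<in>torus N. (fst (S r))\<^sup>2 + (snd (S r))\<^sup>2)" by (simp add: X_def Z_def sum.distrib)
    also have "\<dots> = (\<Sum>r\<in>torus N. 1)" using c by (intro sum.cong) (auto simp: is_config_def)
    finally show ?thesis by (simp add: card_torus)
  qed
  have X0: "X \<ge> 0" "Z \<ge> 0" unfolding X_def Z_def by (auto intro: sum_nonneg)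
  have H: "hamiltonian N J1 J2 S = - J1 * (X - DX N S / 2) - J2 * (Z - DZ N S / 2)"
    unfolding X_def Z_def by (rule ham_decomp[OF E N])
  have le1: "hamiltonian N J1 J2 S \<le> - J1 * (N * N)"
    using g const_config(1) const_ham(1)[OF E N, of J1 J2] unfolding ground_state_def by metis
  have le2: "hamiltonian N J1 J2 S \<le> - J2 * (N * N)"
    using g const_config(2) const_ham(2)[OF E N, of J1 J2] unfolding ground_state_def by metis
  have D: "DX N S \<ge> 0" "DZ N S \<ge> 0" by (rule DX_nonneg, rule DZ_nonneg)
  have p1: "J1 * DX N S \<ge> 0" "J2 * DZ N S \<ge> 0" using D J by auto
  have res: "DX N S = 0 \<and> DZ N S = 0 \<and> (J1 > J2 \<longrightarrow> Z = 0) \<and> (J2 > J1 \<longrightarrow> X = 0)"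
  proof (cases "J1 \<ge> J2")
    case True
    have "(J1 - J2) * Z \<ge> 0" using True X0 by auto
    moreover have "(J1 - J2) * Z + J1 * DX N S / 2 + J2 * DZ N S / 2 \<le> 0"
      using le1 H XZ by (simp add: algebra_simps) (smt (verit) distrib_left)
    ultimately have a: "(J1 - J2) * Z = 0" "J1 * DX N S = 0" "J2 * DZ N S = 0" using p1 by linarith+
    thus ?thesis using J True by auto
  next
    case False
    have "(J2 - J1) * X \<ge> 0" using False X0 by auto
    moreover have "(J2 - J1) * X + J1 * DX N S / 2 + J2 * DZ N S / 2 \<le> 0"
      using le2 H XZ by (simp add: algebra_simps) (smt (verit) distrib_left)
    ultimately have a: "(J2 - J1) * X = 0" "J1 * DX N S = 0" "J2 * DZ N S = 0" using p1 by linarith+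
    thus ?thesis using J False by auto
  qed
  have t0: "(0,0) \<in> torus N" using N by (simp add: torus_def)
  have "Z = 0 \<Longrightarrow> snd (S (0,0)) = 0"
    unfolding Z_def using sum_nonneg_eq_0_iff[OF fin, of "\<lambda>r. (snd (S r))\<^sup>2"] t0 by auto
  moreover have "X = 0 \<Longrightarrow> fst (S (0,0)) = 0"
    unfolding X_def using sum_nonneg_eq_0_iff[OF fin, of "\<lambda>r. (fst (S r))\<^sup>2"] t0 by auto
  ultimately show ?thesis using res DX_DZ_zero by blast
qed

theorem theorem2p1:
  fixes N :: nat and J1 J2 :: real
  assumes "even N" and "N > 0" and "J1 > 0" and "J2 > 0"
  shows "(J1 = J2 \<longrightarrow> (\<forall>S. ground_state N J1 J2 S \<longrightarrow>
            (\<exists>e. (fst e)\<^sup>2 + (snd e)\<^sup>2 = 1 \<and> obtainable_from N e S)))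
       \<and> (J1 > J2 \<longrightarrow> (\<forall>S. ground_state N J1 J2 S \<longrightarrow> obtainable_from N (1, 0) S))
       \<and> (J2 > J1 \<longrightarrow> (\<forall>S. ground_state N J1 J2 S \<longrightarrow> obtainable_from N (0, 1) S))"
proof (intro conjI impI allI)
  have t0: "(0,0) \<in> torus N" using assms(2) by (simp add: torus_def)
  fix S assume g: "ground_state N J1 J2 S"
  have c: "is_config N S" using g by (simp add: ground_state_def)
  have u: "(fst (S (0,0)))\<^sup>2 + (snd (S (0,0)))\<^sup>2 = 1" using c t0 by (simp add: is_config_def)
  have fl: "flat N S \<and> (J1 > J2 \<longrightarrow> snd (S (0,0)) = 0) \<and> (J2 > J1 \<longrightarrow> fst (S (0,0)) = 0)"
    using gs_flat[OF assms g] .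
  have ob: "obtainable_from N (\<bar>fst (S (0,0))\<bar>, \<bar>snd (S (0,0))\<bar>) S"
    using flat_obtainable[OF assms(1,2) c] fl by blast
  {
    assume "J1 = J2"
    show "\<exists>e. (fst e)\<^sup>2 + (snd e)\<^sup>2 = 1 \<and> obtainable_from N e S"
      using ob u by (intro exI[of _ "(\<bar>fst (S (0,0))\<bar>, \<bar>snd (S (0,0))\<bar>)"]) simp
  }
  {
    assume "J1 > J2"
    hence z: "snd (S (0,0)) = 0" using fl by blast
    hence "\<bar>fst (S (0,0))\<bar> = 1" using u by (simp add: abs_square_eq_1)
    thus "obtainable_from N (1, 0) S" using ob z by simp
  }
  {
    assume "J2 > J1"
    hence z: "fst (S (0,0)) = 0" using fl by blast
    hence "\<bar>snd (S (0,0))\<bar> = 1" using u by (simp add: abs_square_eq_1)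
    thus "obtainable_from N (0, 1) S" using ob z by simp
  }
qed

end
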